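(* Let $X$ be a random vector in $\mathcal{X}\subset\mathbb{R}^d$ with distribution $F$ having a density $f$ with respect to Lebesgue measure $Leb$, and let $\mathcal{G}$ be a class of Borel subsets of $\mathcal{X}$. Assume there is a countable subcollection $\Pi=\{F_i\}_{i\ge1}\subset\mathcal{G}$ forming a partition of $\mathcal{X}$ with $\sigma(\Pi)\subset\mathcal{G}$. Let $\mathcal{F}=\sigma(\Pi)$ and $f_\Pi(x)=\sum_{i\ge1}\mathds{1}_{x\in F_i}\frac{1}{Leb(F_i)}\int_{F_i}f(y)\,dy$. For a class $\mathcal{C}$ of measurable sets define $\textsc{EM}^*_{\mathcal{C}}(t)=\max_{\Omega\in\mathcal{C}}\{F(\Omega)-t\,Leb(\Omega)\}$, and $\textsc{EM}^*(t)=\max_{\Omega\ \text{measurable}}\{F(\Omega)-t\,Leb(\Omega)\}$. Then for every $t\in[0,\|f\|_\infty]$, $$0\le\textsc{EM}^*(t)-\textsc{EM}^*_{\mathcal{F}}(t)\le\|f-f_\Pi\|_{L^1}.$$ Consequently, $\textsc{EM}^*-\textsc{EM}^*_{\mathcal{G}}$ is uniformly bounded on $[0,\|f\|_\infty]$ by $\|f-f_\Pi\|_{L^1}$.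
   Context: $\sigma(\Pi)$ denotes the $\sigma$-algebra generated by $\Pi$; $\|f\|_\infty=\sup_x|f(x)|$. *)

theory Defs
  imports "HOL-Probability.Probability"
begin

text \<open>Excess-mass functional restricted to a class C of measurable sets:
  EM_C(t) = sup over Omega in C of F(Omega) - t * Leb(Omega)  (valued in ereal,
  so that sets of infinite Lebesgue measure are allowed).\<close>
definition EM_class :: "'a::euclidean_space measure \<Rightarrow> 'a set set \<Rightarrow> real \<Rightarrow> ereal" where
  "EM_class F C t = (SUP \<Omega>\<in>C. ereal (measure F \<Omega>) - ereal t * enn2ereal (emeasure lborel \<Omega>))"

definition f_part :: "'a::euclidean_space set set \<Rightarrow> ('a \<Rightarrow> real) \<Rightarrow> 'a \<Rightarrow> real" where
  "f_part P f x = infsum (\<lambda>A. indicator A x * ((1 / measure lborel A) * (\<integral>y\<in>A. f y \<partial>lborel))) P"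

definition sup_norm :: "('a \<Rightarrow> real) \<Rightarrow> ereal" where
  "sup_norm f = (SUP x. ereal \<bar>f x\<bar>)"

end

theory Submission imports Defs begin


lemma fpart_in:
  assumes "disjoint P" "A \<in> P" "x \<in> A"
  shows "f_part P f x = (1 / measure lborel A) * (\<integral>y\<in>A. f y \<partial>lborel)"
proof -
  have "f_part P f x = infsum (\<lambda>B. if B = A then indicator B x * ((1 / measure lborel B) * (\<integral>y\<in>B. f y \<partial>lborel)) else 0) P"
    unfolding f_part_def
  proof (rule infsum_cong)
    fix B assume "B \<in> P"
    show "indicator B x * (1 / measure lborel B * set_lebesgue_integral lborel B f) =
         (if B = A then indicator B x * (1 / measure lborel B * set_lebesgue_integral lborel B f) else 0)"
      using assms \<open>B \<in> P\<close> by (auto simp: disjoint_def indicator_def)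
  qed
  also have "\<dots> = infsum (\<lambda>B. indicator B x * ((1 / measure lborel B) * (\<integral>y\<in>B. f y \<partial>lborel))) {A}"
    by (rule infsum_cong_neutral) (use assms in auto)
  finally show ?thesis using assms by simp
qed

lemma fpart_out:
  assumes "x \<notin> \<Union>P"
  shows "f_part P f x = 0"
  unfolding f_part_def by (rule infsum_0) (use assms in auto)

lemma core:
  fixes F :: "'a::euclidean_space measure" and f :: "'a \<Rightarrow> real"
  assumes Fd: "F = density lborel (\<lambda>x. ennreal (f x))" and fm: "f \<in> borel_measurable lborel"
    and fnn: "\<And>x. 0 \<le> f x" and Fprob: "prob_space F"
    and Pc: "countable P" and Pd: "disjoint P" and PU: "\<Union>P = \<X>" and Ps: "P \<subseteq> sets lborel"
    and Pm: "\<And>A. A \<in> P \<Longrightarrow> 0 < emeasure lborel A \<and> emeasure lborel A < \<infinity>"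
    and t: "0 < t" and Om: "\<Omega> \<in> sets lborel" "\<Omega> \<subseteq> \<X>" "emeasure lborel \<Omega> < \<infinity>"
  shows "ereal (measure F \<Omega>) - ereal t * enn2ereal (emeasure lborel \<Omega>)
     \<le> EM_class F (sigma_sets \<X> P) t + enn2ereal (\<integral>\<^sup>+ x. ennreal \<bar>f x - f_part P f x\<bar> \<partial>lborel)"
proof -
  interpret prob_space F by (rule Fprob)
  have sF: "sets F = sets lborel" using Fd by simp
  define c where "c A = (1 / measure lborel A) * (\<integral>y\<in>A. f y \<partial>lborel)" for A
  define g where "g = f_part P f"
  have g_in: "g x = c A" if "A \<in> P" "x \<in> A" for A x
    unfolding g_def c_def by (rule fpart_in[OF Pd that])
  have g_out: "g x = 0" if "x \<notin> \<X>" for x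
    unfolding g_def using PU that by (intro fpart_out) auto
  have Fset: "ennreal (measure F S) = (\<integral>\<^sup>+x. ennreal (f x * indicator S x) \<partial>lborel)"
    if "S \<in> sets lborel" for S
  proof -
    have "ennreal (measure F S) = emeasure F S" using emeasure_eq_measure by simp
    also have "\<dots> = (\<integral>\<^sup>+x. ennreal (f x) * indicator S x \<partial>lborel)"
      unfolding Fd using that fm by (intro emeasure_density) auto
    finally show ?thesis by (simp add: nn_integral_set_ennreal)
  qed
  have Fint: "(\<integral>y\<in>S. f y \<partial>lborel) = measure F S" if "S \<in> sets lborel" for S
  proof -
    have "integrable lborel (\<lambda>x. f x * indicator S x) \<and> integral\<^sup>L lborel (\<lambda>x. f x * indicator S x) = measure F S"
      using Fset[OF that] that fm fnn
      by (subst nn_integral_eq_integrable[symmetric]) auto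
    then show ?thesis by (simp add: set_lebesgue_integral_def mult.commute)
  qed
  have c_nn: "0 \<le> c A" if "A \<in> P" for A
    unfolding c_def using Fint[of A] that Ps by auto
  have g_nn: "0 \<le> g x" for x
  proof (cases "x \<in> \<X>")
    case True then obtain A where "A \<in> P" "x \<in> A" using PU by auto
    then show ?thesis using g_in c_nn by auto
  qed (simp add: g_out)
  have cell: "(\<integral>\<^sup>+x. ennreal (g x * indicator A x) \<partial>lborel) = ennreal (measure F A)" if A: "A \<in> P" for A
  proof -
    have As: "A \<in> sets lborel" using A Ps by auto
    have mA: "emeasure lborel A = ennreal (measure lborel A)" "measure lborel A > 0"
      using Pm[OF A] by (auto simp: emeasure_eq_ennreal_measure measure_def enn2real_positive_iff)
    have "(\<integral>\<^sup>+x. ennreal (g x * indicator A x) \<partial>lborel) = (\<integral>\<^sup>+x. ennreal (c A) * indicator A x \<partial>lborel)"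
      by (rule nn_integral_cong) (auto simp: g_in[OF A] indicator_def)
    also have "\<dots> = ennreal (c A) * ennreal (measure lborel A)"
      using As mA by (simp add: nn_integral_cmult_indicator)
    also have "\<dots> = ennreal (c A * measure lborel A)" using c_nn[OF A] by (simp add: ennreal_mult)
    also have "c A * measure lborel A = measure F A"
      unfolding c_def using mA Fint[OF As] by simp
    finally show ?thesis .
  qed
  have gm: "g \<in> borel_measurable lborel"
  proof (rule measurable_piecewise_restrict[of "insert (UNIV - \<X>) P"])
    show "countable (insert (UNIV - \<X>) P)" using Pc by simp
    have Xs: "\<X> \<in> sets lborel" using PU Ps Pc by (metis sets.countable_Union)
    show "\<Omega> \<inter> space lborel \<in> sets lborel" if "\<Omega> \<in> insert (UNIV - \<X>) P" for \<Omega>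
      using that Ps Xs by auto
    show "space lborel \<subseteq> \<Union> (insert (UNIV - \<X>) P)" using PU by auto
    show "g \<in> borel_measurable (restrict_space lborel \<Omega>)" if "\<Omega> \<in> insert (UNIV - \<X>) P" for \<Omega>
    proof (cases "\<Omega> \<in> P")
      case True
      have "g \<in> borel_measurable (restrict_space lborel \<Omega>) \<longleftrightarrow> (\<lambda>_. c \<Omega>) \<in> borel_measurable (restrict_space lborel \<Omega>)"
        by (rule measurable_cong) (auto simp: g_in[OF True] space_restrict_space)
      then show ?thesis by simp
    next
      case False
      then have "\<Omega> = UNIV - \<X>" using that by auto
      have "g \<in> borel_measurable (restrict_space lborel \<Omega>) \<longleftrightarrow> (\<lambda>_. 0::real) \<in> borel_measurable (restrict_space lborel \<Omega>)"
        by (rule measurable_cong) (auto simp: g_out space_restrict_space \<open>\<Omega> = UNIV - \<X>\<close>)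
      then show ?thesis by simp
    qed
  qed
  define Q where "Q = {A\<in>P. t < c A}"
  define O' where "O' = \<Union>Q"
  have QP: "Q \<subseteq> P" and Qc: "countable Q" using Pc by (auto simp: Q_def intro: countable_subset)
  have O'sig: "O' \<in> sigma_sets \<X> P"
    unfolding O'_def using QP Qc by (intro sigma_sets_UNION) (auto intro: sigma_sets.Basic)
  have O's: "O' \<in> sets lborel"
    unfolding O'_def using QP Qc Ps by (intro sets.countable_Union) auto
  have disjQ: "disjoint_family_on (\<lambda>A. A) Q"
    using Pd QP unfolding disjoint_family_on_def disjoint_def by auto
  have key: "(\<integral>\<^sup>+x. ennreal (g x * indicator O' x) \<partial>lborel) = ennreal (measure F O')"
  proof -
    have "(\<integral>\<^sup>+x. ennreal (g x * indicator O' x) \<partial>lborel) = emeasure (density lborel (\<lambda>x. ennreal (g x))) O'"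
      using gm O's by (subst emeasure_density) (auto simp: nn_integral_set_ennreal)
    also have "\<dots> = (\<integral>\<^sup>+A. emeasure (density lborel (\<lambda>x. ennreal (g x))) A \<partial>count_space Q)"
      unfolding O'_def using emeasure_UN_countable[of Q "\<lambda>A. A" "density lborel (\<lambda>x. ennreal (g x))"] QP Ps Qc disjQ
      by auto
    also have "\<dots> = (\<integral>\<^sup>+A. emeasure F A \<partial>count_space Q)"
    proof (rule nn_integral_cong)
      fix A assume "A \<in> space (count_space Q)"
      then have A: "A \<in> P" using QP by auto
      have "emeasure (density lborel (\<lambda>x. ennreal (g x))) A = (\<integral>\<^sup>+x. ennreal (g x * indicator A x) \<partial>lborel)"
        using gm A Ps by (subst emeasure_density) (auto simp: nn_integral_set_ennreal)
      also have "\<dots> = emeasure F A" using cell[OF A] emeasure_eq_measure by simp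
      finally show "emeasure (density lborel (\<lambda>x. ennreal (g x))) A = emeasure F A" .
    qed
    also have "\<dots> = emeasure F O'"
    proof -
      have "emeasure F (\<Union>((\<lambda>A. A) ` Q)) = (\<integral>\<^sup>+A. emeasure F A \<partial>count_space Q)"
        by (rule emeasure_UN_countable) (use QP Ps Qc disjQ sF in auto)
      then show ?thesis unfolding O'_def by simp
    qed
    finally show ?thesis using emeasure_eq_measure by simp
  qed
  have in_O': "t < g x" if "x \<in> O'" for x
    using that g_in unfolding O'_def Q_def by auto
  have out_O': "g x \<le> t" if xx: "x \<in> \<Omega>" "x \<notin> O'" for x
  proof -
    obtain A where A: "A \<in> P" "x \<in> A" using xx Om PU by auto
    then have "A \<notin> Q" using xx unfolding O'_def by auto
    then show ?thesis using A g_in unfolding Q_def by auto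
  qed
  have pw: "f x * indicator \<Omega> x + t * indicator O' x \<le> \<bar>f x - g x\<bar> + g x * indicator O' x + t * indicator \<Omega> x" for x
    using in_O'[of x] out_O'[of x] g_nn[of x] fnn[of x] t
    by (cases "x \<in> \<Omega>"; cases "x \<in> O'") (auto simp: indicator_def)
  have tint: "(\<integral>\<^sup>+x. ennreal (t * indicator S x) \<partial>lborel) = ennreal t * emeasure lborel S" if "S \<in> sets lborel" for S
  proof -
    have "(\<integral>\<^sup>+x. ennreal (t * indicator S x) \<partial>lborel) = (\<integral>\<^sup>+x. ennreal t * indicator S x \<partial>lborel)"
      by (rule nn_integral_cong) (auto simp: indicator_def)
    then show ?thesis using that by (simp add: nn_integral_cmult_indicator)
  qed
  define D where "D = (\<integral>\<^sup>+ x. ennreal \<bar>f x - f_part P f x\<bar> \<partial>lborel)"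
  have Om_m: "\<Omega> \<in> sets lborel" using Om by auto
  have big: "ennreal (measure F \<Omega>) + ennreal t * emeasure lborel O'
      \<le> D + ennreal (measure F O') + ennreal t * emeasure lborel \<Omega>"
  proof -
    have "ennreal (measure F \<Omega>) + ennreal t * emeasure lborel O'
        = (\<integral>\<^sup>+x. ennreal (f x * indicator \<Omega> x) \<partial>lborel) + (\<integral>\<^sup>+x. ennreal (t * indicator O' x) \<partial>lborel)"
      using Fset[OF Om_m] tint[OF O's] by simp
    also have "\<dots> = (\<integral>\<^sup>+x. ennreal (f x * indicator \<Omega> x) + ennreal (t * indicator O' x) \<partial>lborel)"
      using fm Om_m O's by (intro nn_integral_add[symmetric]) auto
    also have "\<dots> = (\<integral>\<^sup>+x. ennreal (f x * indicator \<Omega> x + t * indicator O' x) \<partial>lborel)"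
      using fnn t by (intro nn_integral_cong) (simp add: ennreal_plus)
    also have "\<dots> \<le> (\<integral>\<^sup>+x. ennreal (\<bar>f x - g x\<bar> + g x * indicator O' x + t * indicator \<Omega> x) \<partial>lborel)"
      by (intro nn_integral_mono ennreal_leI pw)
    also have "\<dots> = (\<integral>\<^sup>+x. (ennreal \<bar>f x - g x\<bar> + ennreal (g x * indicator O' x)) + ennreal (t * indicator \<Omega> x) \<partial>lborel)"
      using g_nn t by (intro nn_integral_cong) (simp add: ennreal_plus)
    also have "\<dots> = (\<integral>\<^sup>+x. ennreal \<bar>f x - g x\<bar> + ennreal (g x * indicator O' x) \<partial>lborel) + (\<integral>\<^sup>+x. ennreal (t * indicator \<Omega> x) \<partial>lborel)"
      using fm gm Om_m O's by (intro nn_integral_add) auto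
    also have "(\<integral>\<^sup>+x. ennreal \<bar>f x - g x\<bar> + ennreal (g x * indicator O' x) \<partial>lborel) =
        (\<integral>\<^sup>+x. ennreal \<bar>f x - g x\<bar> \<partial>lborel) + (\<integral>\<^sup>+x. ennreal (g x * indicator O' x) \<partial>lborel)"
      using fm gm Om_m O's by (intro nn_integral_add) auto
    finally show ?thesis unfolding D_def g_def[symmetric] key tint[OF Om_m] .
  qed
  have O'fin: "emeasure lborel O' < \<infinity>"
  proof -
    have "ennreal t * emeasure lborel O' = (\<integral>\<^sup>+x. ennreal (t * indicator O' x) \<partial>lborel)"
      using tint[OF O's] by simp
    also have "\<dots> \<le> (\<integral>\<^sup>+x. ennreal (g x * indicator O' x) \<partial>lborel)"
      using in_O' by (intro nn_integral_mono ennreal_leI) (auto simp: indicator_def less_imp_le)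
    also have "\<dots> < \<infinity>" unfolding key by simp
    finally show ?thesis using t by (auto simp: ennreal_mult_less_top)
  qed
  define L where "L = measure lborel \<Omega>"
  define L' where "L' = measure lborel O'"
  have eL: "emeasure lborel \<Omega> = ennreal L" unfolding L_def using Om by (simp add: emeasure_eq_ennreal_measure)
  have eL': "emeasure lborel O' = ennreal L'" unfolding L'_def using O'fin by (simp add: emeasure_eq_ennreal_measure)
  have L0: "0 \<le> L" "0 \<le> L'" unfolding L_def L'_def by auto
  have EMlow: "ereal (measure F O') - ereal t * ereal L' \<le> EM_class F (sigma_sets \<X> P) t"
    unfolding EM_class_def using O'sig eL' L0
    by (intro SUP_upper2[OF O'sig]) (simp add: enn2ereal_ennreal)
  have EM0: "0 \<le> EM_class F (sigma_sets \<X> P) t"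
    unfolding EM_class_def by (intro SUP_upper2[OF sigma_sets.Empty]) (simp add: zero_ennreal.rep_eq)
  show ?thesis
  proof (cases "D = \<infinity>")
    case True
    then show ?thesis using EM0 unfolding D_def[symmetric] by auto
  next
    case False
    define d where "d = enn2real D"
    have Dd: "D = ennreal d" "0 \<le> d" using False unfolding d_def by (auto simp: less_top)
    have "ennreal (measure F \<Omega> + t * L') \<le> ennreal (d + measure F O' + t * L)"
      using big unfolding Dd eL eL' using L0 t Dd
      by (simp add: ennreal_plus ennreal_mult)
    then have r: "measure F \<Omega> + t * L' \<le> d + measure F O' + t * L"
      using L0 t Dd by (subst (asm) ennreal_le_iff) auto
    have "ereal (measure F \<Omega>) - ereal t * enn2ereal (emeasure lborel \<Omega>) = ereal (measure F \<Omega> - t * L)"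
      unfolding eL using L0 by (simp add: enn2ereal_ennreal)
    also have "\<dots> \<le> (ereal (measure F O') - ereal t * ereal L') + ereal d"
      using r by simp
    also have "\<dots> \<le> EM_class F (sigma_sets \<X> P) t + ereal d"
      by (intro add_right_mono EMlow)
    finally show ?thesis unfolding D_def[symmetric] Dd using Dd by (simp add: enn2ereal_ennreal)
  qed
qed



lemma ereal_aux:
  fixes a b d :: ereal
  assumes "0 \<le> a" "a \<le> b" "b \<le> 1" "b \<le> a + d" "0 \<le> d"
  shows "0 \<le> b - a \<and> b - a \<le> d"
proof -
  obtain ra where ra: "a = ereal ra" using assms by (cases a) auto
  obtain rb where rb: "b = ereal rb" using assms by (cases b) auto
  show ?thesis using assms unfolding ra rb by (cases d) auto
qed

lemma EM_le1:
  assumes "prob_space F" "0 \<le> t"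
  shows "EM_class F C t \<le> 1"
  unfolding EM_class_def
proof (rule SUP_least)
  fix \<Omega> assume "\<Omega> \<in> C"
  have "0 \<le> ereal t * enn2ereal (emeasure lborel \<Omega>)" using assms by simp
  then have "ereal (measure F \<Omega>) - ereal t * enn2ereal (emeasure lborel \<Omega>) \<le> ereal (measure F \<Omega>)"
    by (cases "ereal t * enn2ereal (emeasure lborel \<Omega>)") auto
  also have "\<dots> \<le> 1" using prob_space.prob_le_1[OF assms(1)] by simp
  finally show "ereal (measure F \<Omega>) - ereal t * enn2ereal (emeasure lborel \<Omega>) \<le> 1" .
qed

lemma EM_ge0:
  assumes "{} \<in> C"
  shows "0 \<le> EM_class F C t"
  unfolding EM_class_def by (intro SUP_upper2[OF assms]) (simp add: zero_ennreal.rep_eq)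

theorem lemma3:
  fixes M :: "'s measure" and X :: "'s \<Rightarrow> 'a::euclidean_space"
    and f :: "'a \<Rightarrow> real" and \<X> :: "'a set"
    and \<G> :: "'a set set" and P :: "'a set set"
  assumes "prob_space M"
    and "\<X> \<in> sets lborel"
    and "distributed M lborel X (\<lambda>x. ennreal (f x))"
    and "\<And>x. 0 \<le> f x"
    and "AE \<omega> in M. X \<omega> \<in> \<X>"
    and "\<G> \<subseteq> {A \<in> sets lborel. A \<subseteq> \<X>}"
    and "countable P" and "P \<subseteq> \<G>"
    and "disjoint P" and "{} \<notin> P" and "\<Union>P = \<X>"
    and "\<And>A. A \<in> P \<Longrightarrow> 0 < emeasure lborel A \<and> emeasure lborel A < \<infinity>"
    and "sigma_sets \<X> P \<subseteq> \<G>"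
  shows "(\<forall>t. 0 \<le> t \<and> ereal t \<le> sup_norm f \<longrightarrow>
      0 \<le> EM_class (distr M lborel X) {\<Omega> \<in> sets lborel. \<Omega> \<subseteq> \<X>} t
             - EM_class (distr M lborel X) (sigma_sets \<X> P) t
      \<and> EM_class (distr M lborel X) {\<Omega> \<in> sets lborel. \<Omega> \<subseteq> \<X>} t
             - EM_class (distr M lborel X) (sigma_sets \<X> P) t
          \<le> enn2ereal (\<integral>\<^sup>+ x. ennreal \<bar>f x - f_part P f x\<bar> \<partial>lborel))
    \<and> (\<forall>t. 0 \<le> t \<and> ereal t \<le> sup_norm f \<longrightarrow>
      0 \<le> EM_class (distr M lborel X) {\<Omega> \<in> sets lborel. \<Omega> \<subseteq> \<X>} t
             - EM_class (distr M lborel X) \<G> t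
      \<and> EM_class (distr M lborel X) {\<Omega> \<in> sets lborel. \<Omega> \<subseteq> \<X>} t
             - EM_class (distr M lborel X) \<G> t
          \<le> enn2ereal (\<integral>\<^sup>+ x. ennreal \<bar>f x - f_part P f x\<bar> \<partial>lborel))"
proof -
  define F where "F = distr M lborel X"
  define D where "D = enn2ereal (\<integral>\<^sup>+ x. ennreal \<bar>f x - f_part P f x\<bar> \<partial>lborel)"
  define full where "full = {\<Omega> \<in> sets lborel. \<Omega> \<subseteq> \<X>}"
  have dist: "F = density lborel (\<lambda>x. ennreal (f x))" "(\<lambda>x. ennreal (f x)) \<in> borel_measurable lborel"
    "X \<in> measurable M lborel"
    using assms(3) unfolding distributed_def F_def by auto
  have fm: "f \<in> borel_measurable lborel"
  proof -
    have "(\<lambda>x. enn2real (ennreal (f x))) \<in> borel_measurable lborel" using dist(2) by measurable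
    then show ?thesis using assms(4) by simp
  qed
  have Fprob: "prob_space F" unfolding F_def by (rule prob_space.prob_space_distr[OF assms(1) dist(3)])
  have sF: "sets F = sets lborel" unfolding F_def by simp
  have Ps: "P \<subseteq> sets lborel" using assms(6,8) by auto
  have sub1: "sigma_sets \<X> P \<subseteq> \<G>" and sub2: "\<G> \<subseteq> full" using assms(6,13) unfolding full_def by auto
  have D0: "0 \<le> D" unfolding D_def by simp
  have main: "EM_class F full t \<le> EM_class F (sigma_sets \<X> P) t + D" if t: "0 \<le> t" for t
    unfolding EM_class_def[of F full]
  proof (rule SUP_least)
    fix \<Omega> assume "\<Omega> \<in> full"
    then have Om: "\<Omega> \<in> sets lborel" "\<Omega> \<subseteq> \<X>" unfolding full_def by auto
    have EM0: "0 \<le> EM_class F (sigma_sets \<X> P) t" by (rule EM_ge0) (rule sigma_sets.Empty)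
    show "ereal (measure F \<Omega>) - ereal t * enn2ereal (emeasure lborel \<Omega>) \<le> EM_class F (sigma_sets \<X> P) t + D"
    proof (cases "t = 0")
      case True
      have "ereal (measure F \<Omega>) - ereal t * enn2ereal (emeasure lborel \<Omega>) = ereal (measure F \<Omega>)"
        using True by (simp add: zero_ereal_def[symmetric])
      also have "\<dots> \<le> ereal (measure F \<X>)"
        using Om assms(2) sF by (simp add: prob_space.finite_measure[OF Fprob] finite_measure.finite_measure_mono)
      also have "\<dots> = ereal (measure F \<X>) - ereal t * enn2ereal (emeasure lborel \<X>)"
        using True by (simp add: zero_ereal_def[symmetric])
      also have "\<dots> \<le> EM_class F (sigma_sets \<X> P) t"
        unfolding EM_class_def by (rule SUP_upper) (rule sigma_sets_top)
      also have "\<dots> \<le> EM_class F (sigma_sets \<X> P) t + D" using D0 by (simp add: add_increasing2)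
      finally show ?thesis .
    next
      case False
      then have tp: "0 < t" using t by simp
      show ?thesis
      proof (cases "emeasure lborel \<Omega> = \<infinity>")
        case True
        then show ?thesis using tp by simp
      next
        case False
        then show ?thesis unfolding D_def
          using core[OF dist(1) fm assms(4) Fprob assms(7) assms(9) assms(11) Ps assms(12) tp Om]
          by (simp add: less_top)
      qed
    qed
  qed
  have A: "0 \<le> EM_class F full t - EM_class F (sigma_sets \<X> P) t \<and>
           EM_class F full t - EM_class F (sigma_sets \<X> P) t \<le> D" if "0 \<le> t" for t
    apply (rule ereal_aux)
        apply (rule EM_ge0, rule sigma_sets.Empty)
       apply (unfold EM_class_def, rule SUP_subset_mono, use sub1 sub2 in auto)[1]
      apply (rule EM_le1[OF Fprob that])
     apply (rule main[OF that])
    apply (rule D0)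
    done
  have B: "0 \<le> EM_class F full t - EM_class F \<G> t \<and>
           EM_class F full t - EM_class F \<G> t \<le> D" if "0 \<le> t" for t
  proof (rule ereal_aux)
    have "EM_class F (sigma_sets \<X> P) t \<le> EM_class F \<G> t"
      unfolding EM_class_def by (rule SUP_subset_mono) (use sub1 in auto)
    moreover have "0 \<le> EM_class F (sigma_sets \<X> P) t" by (rule EM_ge0) (rule sigma_sets.Empty)
    ultimately show "0 \<le> EM_class F \<G> t" "EM_class F full t \<le> EM_class F \<G> t + D"
      using main[OF that] by (auto intro: order_trans add_right_mono)
    show "EM_class F \<G> t \<le> EM_class F full t"
      unfolding EM_class_def by (rule SUP_subset_mono) (use sub2 in auto)
    show "EM_class F full t \<le> 1" by (rule EM_le1[OF Fprob that])
    show "0 \<le> D" by (rule D0)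
  qed
  show ?thesis
    unfolding F_def[symmetric] full_def[symmetric] D_def[symmetric]
  proof (intro conjI allI impI)
    fix t assume "0 \<le> t \<and> ereal t \<le> sup_norm f"
    then have t0: "0 \<le> t" by simp
    show "0 \<le> EM_class F full t - EM_class F (sigma_sets \<X> P) t" using A[OF t0] by (rule conjunct1)
    show "EM_class F full t - EM_class F (sigma_sets \<X> P) t \<le> D" using A[OF t0] by (rule conjunct2)
  next
    fix t assume "0 \<le> t \<and> ereal t \<le> sup_norm f"
    then have t0: "0 \<le> t" by simp
    show "0 \<le> EM_class F full t - EM_class F \<G> t" using B[OF t0] by (rule conjunct1)
    show "EM_class F full t - EM_class F \<G> t \<le> D" using B[OF t0] by (rule conjunct2)
  qed
qed

end
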